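(* Let $\Sigma_2=\{1,2\}^{\mathbb{Z}}$ with the infinite product topology, let $T\colon\Sigma_2\to\Sigma_2$ be the shift $T[(x_n)_{n\in\mathbb{Z}}]=(x_{n+1})_{n\in\mathbb{Z}}$, and let $d$ be any metric on $\Sigma_2$ which generates the product topology. Then there exist functions $f,g\colon\Sigma_2\to(0,1]$ and $\phi\colon\Sigma_2\to\mathbb{R}$, all Lipschitz continuous with respect to $d$, such that the function $A\colon\Sigma_2\to\mathrm{GL}_2(\mathbb{R})$, \[A(x):=\begin{pmatrix}f(x)&\phi(x)\\0&g(x)\end{pmatrix},\] satisfies \[\lim_{n\to\infty}\sup_{x\in\Sigma_2}\|A(T^{n-1}x)\cdots A(x)\|^{1/n}=1,\qquad \lim_{n\to\infty}\frac1n\sup_{x\in\Sigma_2}\|A(T^{n-1}x)\cdots A(x)\|=0,\] and \[\sup_{n\ge1}\sup_{x\in\Sigma_2}\|A(T^{n-1}x)\cdots A(x)\|=\infty.\]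
   Context: $\|\cdot\|$ is the Euclidean operator norm on $2\times 2$ real matrices. *)

theory Defs
  imports "HOL-Analysis.Analysis"
begin

definition Sigma2 :: "(int \<Rightarrow> nat) set" where
  "Sigma2 = PiE UNIV (\<lambda>_. {1, 2})"

definition prod_top :: "(int \<Rightarrow> nat) topology" where
  "prod_top = product_topology (\<lambda>_. discrete_topology {1, 2}) UNIV"

definition shift :: "(int \<Rightarrow> nat) \<Rightarrow> (int \<Rightarrow> nat)" where
  "shift x = (\<lambda>n. x (n + 1))"

definition lipschitz_wrt :: "('a \<Rightarrow> 'a \<Rightarrow> real) \<Rightarrow> 'a set \<Rightarrow> ('a \<Rightarrow> real) \<Rightarrow> bool" where
  "lipschitz_wrt d S h \<longleftrightarrow> (\<exists>L. \<forall>x\<in>S. \<forall>y\<in>S. \<bar>h x - h y\<bar> \<le> L * d x y)"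

definition opnorm :: "real^2^2 \<Rightarrow> real" where
  "opnorm M = onorm (\<lambda>v. M *v v)"

definition uptri :: "real \<Rightarrow> real \<Rightarrow> real \<Rightarrow> real^2^2" where
  "uptri a b c = vector [vector [a, b], vector [0, c]]"

fun cocycle :: "('a \<Rightarrow> real^2^2) \<Rightarrow> ('a \<Rightarrow> 'a) \<Rightarrow> nat \<Rightarrow> 'a \<Rightarrow> real^2^2" where
  "cocycle A T 0 x = mat 1"
| "cocycle A T (Suc n) x = A ((T ^^ n) x) ** cocycle A T n x"

end

theory Submission
  imports Defs "HOL-Real_Asymp.Real_Asymp"
begin

lemma Sigma2_iff: "x \<in> Sigma2 \<longleftrightarrow> (\<forall>i. x i = 1 \<or> x i = 2)"
  by (auto simp: Sigma2_def PiE_def extensional_def)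

lemma topspace_prod_top: "topspace prod_top = Sigma2"
  by (simp add: prod_top_def Sigma2_def)

definition cyl :: "(int \<Rightarrow> nat) \<Rightarrow> nat \<Rightarrow> (int \<Rightarrow> nat) set" where
  "cyl x R = {y \<in> Sigma2. \<forall>i. \<bar>i\<bar> \<le> int R \<longrightarrow> y i = x i}"

lemma cyl_PiE: 
  assumes "x \<in> Sigma2"
  shows "cyl x R = PiE UNIV (\<lambda>i. if \<bar>i\<bar> \<le> int R then {x i} else {1,2})"
proof (intro set_eqI iffI)
  fix y assume "y \<in> cyl x R"
  then show "y \<in> PiE UNIV (\<lambda>i. if \<bar>i\<bar> \<le> int R then {x i} else {1,2})"
    unfolding cyl_def Sigma2_iff by (auto simp: PiE_def extensional_def Pi_def)
next
  fix y assume y: "y \<in> PiE UNIV (\<lambda>i. if \<bar>i\<bar> \<le> int R then {x i} else {1,2})"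
  have "y i = 1 \<or> y i = 2" for i
    using y assms PiE_mem[OF y, of i] by (auto simp: Sigma2_iff split: if_splits)
  moreover have "\<bar>i\<bar> \<le> int R \<Longrightarrow> y i = x i" for i
    using PiE_mem[OF y, of i] by auto
  ultimately show "y \<in> cyl x R" by (auto simp: cyl_def Sigma2_iff)
qed

lemma cyl_open:
  assumes "x \<in> Sigma2"
  shows "openin prod_top (cyl x R)"
proof -
  have "finite {i. (if \<bar>i\<bar> \<le> int R then {x i} else {1,2}) \<noteq> {1::nat,2}}"
    by (rule finite_subset[of _ "{-int R..int R}"]) (auto split: if_splits)
  moreover have "\<forall>i. openin (discrete_topology {1::nat,2}) (if \<bar>i\<bar> \<le> int R then {x i} else {1,2})"
    using assms by (auto simp: Sigma2_iff)
  ultimately show ?thesis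
    unfolding cyl_PiE[OF assms] prod_top_def
    by (subst openin_PiE_gen) auto
qed

lemma compact_prod_top: "compact_space prod_top"
  unfolding prod_top_def
  by (subst compact_space_product_topology) (auto simp: compact_space_discrete_topology)

lemma uptri_nth:
  "uptri a b c $ 1 $ 1 = a" "uptri a b c $ 1 $ 2 = b"
  "uptri a b c $ 2 $ 1 = 0" "uptri a b c $ 2 $ 2 = c"
  by (simp_all add: uptri_def)

lemma uptri_mult: "uptri a b c ** uptri a' b' c' = uptri (a*a') (a*b' + b*c') (c*c')"
  by (simp add: vec_eq_iff forall_2 matrix_matrix_mult_def sum_2 uptri_nth)

lemma mat1_uptri: "(mat 1 :: real^2^2) = uptri 1 0 1"
  by (simp add: vec_eq_iff forall_2 mat_def uptri_nth)

lemma uptri_mv: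
  "(uptri a b c *v v) $ 1 = a * v$1 + b * v$2" "(uptri a b c *v v) $ 2 = c * v$2"
  by (simp_all add: matrix_vector_mult_def sum_2 uptri_nth)

lemma opnorm_ge:
  shows "\<bar>b\<bar> \<le> opnorm (uptri a b c)" "\<bar>c\<bar> \<le> opnorm (uptri a b c)"
proof -
  let ?v = "axis 2 1 :: real^2"
  have n: "norm ?v = 1" by simp
  have "norm (uptri a b c *v ?v) \<le> opnorm (uptri a b c) * norm ?v"
    unfolding opnorm_def by (rule onorm) simp
  then have le: "norm (uptri a b c *v ?v) \<le> opnorm (uptri a b c)" using n by simp
  have "(uptri a b c *v ?v) $ 1 = b" "(uptri a b c *v ?v) $ 2 = c"
    by (simp_all add: uptri_mv axis_def)
  then show "\<bar>b\<bar> \<le> opnorm (uptri a b c)" "\<bar>c\<bar> \<le> opnorm (uptri a b c)"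
    using component_le_norm_cart[of "uptri a b c *v ?v" 1] component_le_norm_cart[of "uptri a b c *v ?v" 2] le
    by auto
qed

lemma opnorm_le: "opnorm (uptri a b c) \<le> \<bar>a\<bar> + \<bar>b\<bar> + \<bar>c\<bar>"
  unfolding opnorm_def
proof (rule onorm_le)
  fix v :: "real^2"
  have "norm (uptri a b c *v v) \<le> \<bar>a * v$1 + b * v$2\<bar> + \<bar>c * v$2\<bar>"
    using norm_le_l1_cart[of "uptri a b c *v v"] by (simp add: sum_2 uptri_mv)
  also have "\<dots> \<le> \<bar>a\<bar> * \<bar>v$1\<bar> + \<bar>b\<bar> * \<bar>v$2\<bar> + \<bar>c\<bar> * \<bar>v$2\<bar>"
    by (simp add: abs_mult abs_triangle_ineq[THEN order_trans])
  also have "\<dots> \<le> \<bar>a\<bar> * norm v + \<bar>b\<bar> * norm v + \<bar>c\<bar> * norm v"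
    by (intro add_mono mult_left_mono component_le_norm_cart) auto
  finally show "norm (uptri a b c *v v) \<le> (\<bar>a\<bar> + \<bar>b\<bar> + \<bar>c\<bar>) * norm v"
    by (simp add: algebra_simps)
qed

lemma shift_pow: "(shift ^^ k) x = (\<lambda>i. x (i + int k))"
  by (induction k) (auto simp: shift_def algebra_simps)

lemma cocycle_formula:
  assumes "\<And>y. fF y \<noteq> 0"
  shows "cocycle (\<lambda>x. uptri (fF x) (\<phi> x) (fF x)) T n x =
    uptri (\<Prod>k<n. fF ((T^^k) x)) ((\<Prod>k<n. fF ((T^^k) x)) * (\<Sum>k<n. \<phi> ((T^^k) x) / fF ((T^^k) x)))
      (\<Prod>k<n. fF ((T^^k) x))"
proof (induction n)
  case 0
  then show ?case by (simp add: mat1_uptri)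
next
  case (Suc n)
  have "fF ((T^^n) x) \<noteq> 0" by (rule assms)
  then show ?case using Suc
    by (simp add: uptri_mult algebra_simps)
qed

lemma prod_upper:
  fixes a :: "nat \<Rightarrow> real"
  assumes "\<And>k. 0 \<le> a k" "\<And>k. a k \<le> 1"
  shows "(\<Prod>k<n. 1 - (a k)^2/2) \<le> exp (- (\<Sum>k<n. (a k)^2) / 2)"
proof -
  have "(\<Prod>k<n. 1 - (a k)^2/2) \<le> (\<Prod>k<n. exp (-((a k)^2/2)))"
  proof (rule prod_mono)
    fix k assume "k \<in> {..<n}"
    have "(a k)^2 \<le> 1" using assms[of k] by (simp add: power_le_one)
    then show "0 \<le> 1 - (a k)^2/2 \<and> 1 - (a k)^2/2 \<le> exp (-((a k)^2/2))"
      using exp_ge_add_one_self[of "-((a k)^2/2)"] by simp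
  qed
  also have "\<dots> = exp (\<Sum>k<n. -((a k)^2/2))" by (simp add: exp_sum)
  also have "(\<Sum>k<n. -((a k)^2/2)) = - (\<Sum>k<n. (a k)^2) / 2"
    by (simp add: sum_negf sum_divide_distrib)
  finally show ?thesis .
qed

lemma prod_lower:
  fixes b :: "nat \<Rightarrow> real"
  assumes "\<And>k. 0 \<le> b k" "\<And>k. b k \<le> 1"
  shows "1 - (\<Sum>k<n. b k) \<le> (\<Prod>k<n. 1 - b k) \<and> (\<Prod>k<n. 1 - b k) \<le> 1 \<and> 0 \<le> (\<Prod>k<n. 1 - b k)"
proof (induction n)
  case 0
  then show ?case by simp
next
  case (Suc n)
  let ?P = "\<Prod>k<n. 1 - b k"
  have b: "0 \<le> b n" "b n \<le> 1" using assms by auto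
  have "?P * (1 - b n) = ?P - ?P * b n" by (simp add: algebra_simps)
  moreover have "?P * b n \<le> b n" using Suc b by (simp add: mult_left_le_one_le)
  moreover have "?P * (1 - b n) \<le> 1" using Suc b by (simp add: mult_le_one)
  moreover have "0 \<le> ?P * (1 - b n)" using Suc b by simp
  ultimately show ?case using Suc by (simp add: algebra_simps)
qed

lemma PS_bound:
  fixes a :: "nat \<Rightarrow> real"
  assumes a0: "\<And>k. 0 \<le> a k" and a1: "\<And>k. a k \<le> 1"
  shows "(\<Prod>k<n. 1 - (a k)^2/2) * (\<Sum>k<n. a k / (1 - (a k)^2/2)) \<le> 2 * sqrt (real n)"
proof -
  define P where "P = (\<Prod>k<n. 1 - (a k)^2/2)"
  define S where "S = (\<Sum>k<n. a k / (1 - (a k)^2/2))"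
  define Q where "Q = (\<Sum>k<n. (a k)^2)"
  have sq: "(a k)^2 \<le> 1" for k using a0[of k] a1[of k] by (simp add: power_le_one)
  have fpos: "0 \<le> 1 - (a k)^2/2" for k using sq[of k] by simp
  have fpos': "0 < 1 - (a k)^2/2" for k using sq[of k] by simp
  have P0: "0 \<le> P" unfolding P_def using fpos by (intro prod_nonneg) auto
  have S0: "0 \<le> S" unfolding S_def using fpos a0 by (intro sum_nonneg divide_nonneg_nonneg) auto
  have Q0: "0 \<le> Q" unfolding Q_def by (simp add: sum_nonneg)
  have "S \<le> (\<Sum>k<n. 2 * a k)" unfolding S_def
  proof (rule sum_mono)
    fix k
    have "1/2 \<le> 1 - (a k)^2/2" using sq[of k] by simp
    then have "a k * (1/2) \<le> a k * (1 - (a k)^2/2)" using a0[of k] by (rule mult_left_mono)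
    then have "a k \<le> 2 * (a k * (1 - (a k)^2/2))" by linarith
    then show "a k / (1 - (a k)^2/2) \<le> 2 * a k" using fpos'[of k]
      by (simp add: pos_divide_le_eq mult.assoc)
  qed
  then have S2: "S \<le> 2 * (\<Sum>k<n. a k)" by (simp add: sum_distrib_left)
  have cs: "(\<Sum>k<n. a k)^2 \<le> Q * real n"
    using sum_squared_le_sum_of_squares[of a "{..<n}"] by (simp add: Q_def)
  have PQ: "P \<le> exp (- Q/2)" unfolding P_def Q_def by (rule prod_upper[OF a0 a1])
  have "P^2 \<le> (exp (-Q/2))^2" using PQ P0 by (simp add: power_mono)
  also have "\<dots> = exp (-Q)" by (simp add: exp_double[symmetric] power2_eq_square exp_add[symmetric])
  finally have P2: "P^2 \<le> exp (-Q)" .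
  have "S^2 \<le> (2 * (\<Sum>k<n. a k))^2" using power_mono[OF S2 S0, of 2] by simp
  also have "\<dots> \<le> 4 * (Q * real n)" using cs by (simp add: power_mult_distrib)
  finally have S2': "S^2 \<le> 4 * (Q * real n)" .
  have "(P * S)^2 = P^2 * S^2" by (simp add: power_mult_distrib)
  also have "\<dots> \<le> exp (-Q) * (4 * (Q * real n))"
    using P2 S2' by (intro mult_mono) auto
  also have "\<dots> = 4 * real n * (Q * exp (-Q))" by (simp add: algebra_simps)
  also have "\<dots> \<le> 4 * real n * 1"
  proof -
    have "Q \<le> exp Q" using exp_ge_add_one_self[of Q] by linarith
    then have "Q * exp (-Q) \<le> 1" by (simp add: exp_minus field_simps)
    then show ?thesis by (intro mult_left_mono) auto
  qed
  finally have "(P*S)^2 \<le> 4 * real n" by simp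
  then have "P * S \<le> sqrt (4 * real n)" using P0 S0 by (intro real_le_rsqrt) auto
  also have "sqrt (4 * real n) = 2 * sqrt (real n)" by (simp add: real_sqrt_mult)
  finally show ?thesis by (simp add: P_def S_def)
qed

definition H1 :: "(int \<Rightarrow> nat) set" where
  "H1 = {x \<in> Sigma2. \<forall>i j. x i = 2 \<and> x j = 2 \<longrightarrow> i = j}"

definition psi :: "((int \<Rightarrow> nat) \<Rightarrow> (int \<Rightarrow> nat) \<Rightarrow> real) \<Rightarrow> (int \<Rightarrow> nat) \<Rightarrow> real" where
  "psi d x = (INF y\<in>H1. d x y)"

definition phi :: "((int \<Rightarrow> nat) \<Rightarrow> (int \<Rightarrow> nat) \<Rightarrow> real) \<Rightarrow> (int \<Rightarrow> nat) \<Rightarrow> real" where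
  "phi d x = min 1 (psi d x)"

definition ff :: "((int \<Rightarrow> nat) \<Rightarrow> (int \<Rightarrow> nat) \<Rightarrow> real) \<Rightarrow> (int \<Rightarrow> nat) \<Rightarrow> real" where
  "ff d x = 1 - (phi d x)^2 / 2"

definition one_seq :: "int \<Rightarrow> nat" where "one_seq = (\<lambda>i. 1)"

lemma one_seq_H1: "one_seq \<in> H1"
  by (simp add: H1_def one_seq_def Sigma2_iff)

lemma H1_sub: "H1 \<subseteq> Sigma2" by (auto simp: H1_def)

context
  fixes d :: "(int \<Rightarrow> nat) \<Rightarrow> (int \<Rightarrow> nat) \<Rightarrow> real"
  assumes ms: "Metric_space Sigma2 d"
    and top: "Metric_space.mtopology Sigma2 d = prod_top"
begin

interpretation M: Metric_space Sigma2 d by (rule ms)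

lemma ball_in_cyl:
  assumes "x \<in> Sigma2"
  shows "\<exists>r>0. \<forall>y\<in>Sigma2. d x y < r \<longrightarrow> y \<in> cyl x R"
proof -
  have "openin M.mtopology (cyl x R)" using cyl_open[OF assms] top by simp
  moreover have "x \<in> cyl x R" using assms by (simp add: cyl_def)
  ultimately obtain r where "r > 0" "M.mball x r \<subseteq> cyl x R"
    unfolding M.openin_mtopology by blast
  then show ?thesis using assms by (auto simp: subset_iff M.in_mball)
qed

lemma cyl_in_ball:
  assumes x: "x \<in> Sigma2" and e: "e > 0"
  shows "\<exists>R. cyl x R \<subseteq> M.mball x e"
proof -
  have "openin prod_top (M.mball x e)" using top by (metis M.openin_mball)
  moreover have "x \<in> M.mball x e" using x e by simp
  ultimately obtain U where U: "finite {i \<in> UNIV. U i \<noteq> topspace (discrete_topology {1::nat,2})}"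
     "x \<in> PiE UNIV U" "PiE UNIV U \<subseteq> M.mball x e"
    unfolding prod_top_def openin_product_topology_alt by blast
  define F where "F = {i \<in> UNIV. U i \<noteq> {1::nat,2}}"
  have fF: "finite F" using U(1) by (simp add: F_def)
  define R where "R = nat (\<Sum>i\<in>F. \<bar>i\<bar>)"
  have "cyl x R \<subseteq> PiE UNIV U"
  proof
    fix y assume y: "y \<in> cyl x R"
    have "y i \<in> U i" for i
    proof (cases "i \<in> F")
      case True
      have "\<bar>i\<bar> \<le> (\<Sum>i\<in>F. \<bar>i\<bar>)"
        using member_le_sum[OF True, of abs] fF by auto
      then have "\<bar>i\<bar> \<le> int R" by (simp add: R_def)
      then have "y i = x i" using y by (simp add: cyl_def)
      then show ?thesis using U(2) by auto
    next
      case False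
      then have "U i = {1,2}" by (simp add: F_def)
      then show ?thesis using y by (auto simp: cyl_def Sigma2_iff)
    qed
    then show "y \<in> PiE UNIV U" by (simp add: PiE_def extensional_def Pi_def)
  qed
  then show ?thesis using U(3) by blast
qed

lemma unif:
  assumes e: "e > 0"
  shows "\<exists>R. \<forall>x\<in>Sigma2. \<forall>y\<in>Sigma2. (\<forall>i. \<bar>i\<bar> \<le> int R \<longrightarrow> x i = y i) \<longrightarrow> d x y < e"
proof -
  have "\<forall>x\<in>Sigma2. \<exists>R. cyl x R \<subseteq> M.mball x (e/2)"
    using cyl_in_ball e by simp
  then obtain Rf where Rf: "\<And>x. x \<in> Sigma2 \<Longrightarrow> cyl x (Rf x) \<subseteq> M.mball x (e/2)"
    by metis
  have "\<forall>U\<in>(\<lambda>x. cyl x (Rf x)) ` Sigma2. openin prod_top U" using cyl_open by auto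
  moreover have "topspace prod_top \<subseteq> \<Union>((\<lambda>x. cyl x (Rf x)) ` Sigma2)"
    by (auto simp: topspace_prod_top cyl_def)
  ultimately obtain FF where FF: "finite FF" "FF \<subseteq> (\<lambda>x. cyl x (Rf x)) ` Sigma2"
      "topspace prod_top \<subseteq> \<Union>FF"
    using compact_prod_top unfolding compact_space_alt by meson
  then obtain X0 where X0: "X0 \<subseteq> Sigma2" "finite X0" "FF = (\<lambda>x. cyl x (Rf x)) ` X0"
    using finite_subset_image by metis
  define R where "R = (\<Sum>x\<in>X0. Rf x)"
  show ?thesis
  proof (intro exI ballI impI)
    fix u v assume u: "u \<in> Sigma2" and v: "v \<in> Sigma2"
      and uv: "\<forall>i. \<bar>i\<bar> \<le> int R \<longrightarrow> u i = v i"
    obtain x0 where x0: "x0 \<in> X0" "u \<in> cyl x0 (Rf x0)"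
      using FF(3) X0(3) u by (auto simp: topspace_prod_top)
    have "Rf x0 \<le> R" unfolding R_def using member_le_sum[OF x0(1), of Rf] X0(2) by simp
    then have "v \<in> cyl x0 (Rf x0)" using x0(2) uv v by (auto simp: cyl_def)
    have sub: "cyl x0 (Rf x0) \<subseteq> M.mball x0 (e/2)" using Rf X0(1) x0(1) by blast
    have "d x0 v < e/2" using sub \<open>v \<in> cyl x0 (Rf x0)\<close> by (auto simp: subset_iff)
    moreover have "d x0 u < e/2" using sub x0(2) by (auto simp: subset_iff)
    ultimately show "d u v < e"
      using M.triangle[of u x0 v] M.commute[of u x0] u v x0 X0(1) by auto
  qed
qed


lemma psi_nonneg: "0 \<le> psi d x"
  unfolding psi_def using one_seq_H1 by (intro cINF_greatest) auto

lemma psi_le: "y \<in> H1 \<Longrightarrow> psi d x \<le> d x y"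
  unfolding psi_def by (rule cINF_lower) (auto simp: bdd_below_def intro!: exI[of _ 0])

lemma psi_lip:
  assumes x: "x \<in> Sigma2" and y: "y \<in> Sigma2"
  shows "psi d x \<le> psi d y + d x y"
proof -
  have "psi d x - d x y \<le> psi d y"
    unfolding psi_def[of d y]
  proof (rule cINF_greatest)
    show "H1 \<noteq> {}" using one_seq_H1 by auto
    fix z assume z: "z \<in> H1"
    have "psi d x \<le> d x z" by (rule psi_le[OF z])
    also have "\<dots> \<le> d x y + d y z" using M.triangle x y z H1_sub by auto
    finally show "psi d x - d x y \<le> d y z" by simp
  qed
  then show ?thesis by simp
qed

lemma phi_bounds: "0 \<le> phi d x" "phi d x \<le> 1"
  using psi_nonneg[of x] by (auto simp: phi_def)

lemma phi_lip:
  assumes x: "x \<in> Sigma2" and y: "y \<in> Sigma2"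
  shows "\<bar>phi d x - phi d y\<bar> \<le> d x y"
  using psi_lip[OF x y] psi_lip[OF y x] M.commute[of x y] by (auto simp: phi_def)

lemma ff_lip:
  assumes x: "x \<in> Sigma2" and y: "y \<in> Sigma2"
  shows "\<bar>ff d x - ff d y\<bar> \<le> d x y"
proof -
  have eq: "ff d x - ff d y = (phi d y - phi d x) * ((phi d x + phi d y)/2)"
    unfolding ff_def power2_eq_square by (simp add: field_simps)
  have "\<bar>ff d x - ff d y\<bar> = \<bar>phi d x - phi d y\<bar> * ((phi d x + phi d y) / 2)"
    using phi_bounds[of x] phi_bounds[of y] unfolding eq abs_mult
    by (simp add: abs_minus_commute)
  also have "\<dots> \<le> \<bar>phi d x - phi d y\<bar> * 1"
    using phi_bounds[of x] phi_bounds[of y] by (intro mult_left_mono) auto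
  finally show ?thesis using phi_lip[OF x y] by simp
qed

lemma phi_one_seq: "phi d one_seq = 0"
proof -
  have "psi d one_seq \<le> d one_seq one_seq" by (rule psi_le[OF one_seq_H1])
  then have "psi d one_seq = 0" using psi_nonneg[of one_seq] one_seq_H1 H1_sub by auto
  then show ?thesis by (simp add: phi_def)
qed

lemma psi_pos:
  assumes z: "z \<in> Sigma2" and ij: "z i = 2" "z j = 2" "i \<noteq> j"
  shows "0 < psi d z"
proof -
  define R where "R = nat (max \<bar>i\<bar> \<bar>j\<bar>)"
  obtain r where r: "r > 0" "\<forall>y\<in>Sigma2. d z y < r \<longrightarrow> y \<in> cyl z R"
    using ball_in_cyl[OF z] by blast
  have "r \<le> psi d z"
    unfolding psi_def
  proof (rule cINF_greatest)
    show "H1 \<noteq> {}" using one_seq_H1 by auto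
    fix y assume y: "y \<in> H1"
    show "r \<le> d z y"
    proof (rule ccontr)
      assume "\<not> r \<le> d z y"
      then have "y \<in> cyl z R" using r y H1_sub by auto
      moreover have "\<bar>i\<bar> \<le> int R" "\<bar>j\<bar> \<le> int R" by (auto simp: R_def)
      ultimately have "y i = 2" "y j = 2" using ij by (auto simp: cyl_def)
      then show False using y ij(3) by (auto simp: H1_def)
    qed
  qed
  then show ?thesis using r by simp
qed


definition AA :: "(int \<Rightarrow> nat) \<Rightarrow> real^2^2" where
  "AA x = uptri (ff d x) (phi d x) (ff d x)"

definition PP where "PP n x = (\<Prod>k<n. ff d ((shift^^k) x))"
definition SS where "SS n x = (\<Sum>k<n. phi d ((shift^^k) x) / ff d ((shift^^k) x))"

lemma ff_bounds: "1/2 \<le> ff d x" "ff d x \<le> 1"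
proof -
  have "(phi d x)^2 \<le> 1" using phi_bounds[of x] by (simp add: power_le_one)
  then show "1/2 \<le> ff d x" "ff d x \<le> 1" by (auto simp: ff_def)
qed

lemma coc: "cocycle (AA) shift n x = uptri (PP n x) (PP n x * SS n x) (PP n x)"
proof -
  have "ff d y \<noteq> 0" for y using ff_bounds(1)[of y] by linarith
  then show ?thesis unfolding AA_def PP_def SS_def by (rule cocycle_formula)
qed

lemma ff_pos: "0 < ff d x" using ff_bounds(1)[of x] by linarith

lemma PP_bounds: "0 < PP n x" "PP n x \<le> 1"
  unfolding PP_def
   apply (simp add: prod_pos ff_pos)
  by (rule prod_le_1) (simp add: ff_bounds less_imp_le[OF ff_pos])

lemma SS_nonneg: "0 \<le> SS n x"
  unfolding SS_def
  by (intro sum_nonneg divide_nonneg_nonneg phi_bounds less_imp_le[OF ff_pos])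

lemma PS_le: "PP n x * SS n x \<le> 2 * sqrt (real n)"
  unfolding PP_def SS_def ff_def
  by (rule PS_bound) (auto simp: phi_bounds)

lemma norm_upper: "opnorm (cocycle (AA) shift n x) \<le> 2 + 2 * sqrt (real n)"
proof -
  have "opnorm (cocycle (AA) shift n x) \<le> \<bar>PP n x\<bar> + \<bar>PP n x * SS n x\<bar> + \<bar>PP n x\<bar>"
    unfolding coc by (rule opnorm_le)
  also have "\<dots> = PP n x + PP n x * SS n x + PP n x"
    using PP_bounds[of n x] SS_nonneg[of n x] by simp
  also have "\<dots> \<le> 1 + 2 * sqrt (real n) + 1"
    using PP_bounds[of n x] PS_le[of n x] by linarith
  finally show ?thesis by simp
qed

lemma norm_lower: "PP n x * SS n x \<le> opnorm (cocycle (AA) shift n x)"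
  "PP n x \<le> opnorm (cocycle (AA) shift n x)"
  unfolding coc using opnorm_ge[where a="PP n x" and b="PP n x * SS n x" and c="PP n x"] by auto

lemma shift_one_seq: "(shift^^k) one_seq = one_seq"
  by (simp add: shift_pow one_seq_def)

lemma norm_one_seq: "1 \<le> opnorm (cocycle (AA) shift n one_seq)"
proof -
  have "PP n one_seq = 1"
    by (simp add: PP_def shift_one_seq ff_def phi_one_seq)
  then show ?thesis using norm_lower(2)[of n one_seq] by simp
qed


lemma unbounded: "\<exists>n\<ge>1. \<exists>x\<in>Sigma2. opnorm (cocycle AA shift n x) > M"
proof -
  define e where "e = 1 / (4 * (\<bar>M\<bar> + 1))"
  have e0: "0 < e" "e \<le> 1/4" by (auto simp: e_def field_simps)
  obtain R where R: "\<forall>x\<in>Sigma2. \<forall>y\<in>Sigma2. (\<forall>i. \<bar>i\<bar> \<le> int R \<longrightarrow> x i = y i) \<longrightarrow> d x y < e"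
    using unif[OF e0(1)] by blast
  define N :: nat where "N = 2*R+1"
  have N1: "N \<ge> 1" by (simp add: N_def)
  define z where "z = (\<lambda>i::int. if int N dvd i then 2 else (1::nat))"
  have zS: "z \<in> Sigma2" by (simp add: Sigma2_iff z_def)
  have shiftS: "(shift^^k) z \<in> Sigma2" for k by (simp add: shift_pow Sigma2_iff z_def)
  define a where "a k = phi d ((shift^^k) z)" for k
  have a0: "0 \<le> a k" "a k \<le> 1" for k by (simp_all add: a_def phi_bounds)
  have a_le: "a k \<le> e" for k
  proof -
    let ?w = "(shift^^k) z"
    define y where "y = (\<lambda>i. if \<bar>i\<bar> \<le> int R then ?w i else 1)"
    have yS: "y \<in> Sigma2" using shiftS[of k] by (auto simp: y_def Sigma2_iff)
    have yH: "y \<in> H1"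
      unfolding H1_def
    proof (intro CollectI conjI allI impI yS)
      fix i j assume ij: "y i = 2 \<and> y j = 2"
      then have i: "\<bar>i\<bar> \<le> int R" "int N dvd i + int k" and j: "\<bar>j\<bar> \<le> int R" "int N dvd j + int k"
        by (auto simp: y_def shift_pow z_def split: if_splits)
      have dv: "int N dvd (i - j)" using dvd_diff[OF i(2) j(2)] by simp
      show "i = j"
      proof (rule ccontr)
        assume "i \<noteq> j"
        then have "\<bar>int N\<bar> \<le> \<bar>i - j\<bar>" using dvd_imp_le_int[OF _ dv] by simp
        then show False using i(1) j(1) by (simp add: N_def)
      qed
    qed
    have "d ?w y < e" using R shiftS[of k] yS by (auto simp: y_def)
    moreover have "psi d ?w \<le> d ?w y" by (rule psi_le[OF yH])
    ultimately show ?thesis by (simp add: a_def phi_def)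
  qed
  have apos: "0 < a 0"
  proof -
    have "0 < psi d z"
      by (rule psi_pos[OF zS, of 0 "int N"]) (use N1 in \<open>auto simp: z_def\<close>)
    then show ?thesis by (simp add: a_def phi_def)
  qed
  have aper: "a (j*N) = a 0" for j
  proof -
    have "(shift^^(j*N)) z = z"
      by (auto simp: shift_pow z_def fun_eq_iff)
    then show ?thesis by (simp add: a_def)
  qed
  define s where "s n = (\<Sum>k<n. a k)" for n
  have smono: "s m \<le> s m'" if "m \<le> m'" for m m'
    unfolding s_def using that a0 by (intro sum_mono2) auto
  have sgrow: "real (Suc j) * a 0 \<le> s (j*N+1)" for j
  proof (induction j)
    case 0
    then show ?case by (simp add: s_def)
  next
    case (Suc j)
    have "s (Suc j * N + 1) = s (Suc j * N) + a (Suc j * N)" by (simp add: s_def)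
    moreover have "s (j*N+1) \<le> s (Suc j * N)" using N1 by (intro smono) simp
    ultimately show ?case using Suc aper[of "Suc j"] by (simp add: algebra_simps)
  qed
  define T where "T = 1 / (2*e)"
  have T0: "0 < T" using e0 by (simp add: T_def)
  obtain j where j: "T / a 0 < real j" using reals_Archimedean2 by blast
  then have "T < real j * a 0" using apos by (simp add: divide_less_eq)
  also have "\<dots> \<le> real (Suc j) * a 0" using apos by (intro mult_right_mono) auto
  also have "\<dots> \<le> s (j*N+1)" by (rule sgrow)
  finally have "\<exists>n. T \<le> s n" by (intro exI[of _ "j*N+1"]) simp
  then obtain n0 where n0: "T \<le> s n0" "\<forall>m<n0. \<not> T \<le> s m"
    using exists_least_iff[of "\<lambda>n. T \<le> s n"] by blast
  have s0: "s 0 = 0" by (simp add: s_def)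
  have "n0 \<noteq> 0" using n0(1) T0 s0 by (metis not_le)
  then obtain m where m: "n0 = Suc m" by (cases n0) auto
  have "s m < T" using n0(2) m by auto
  then have sn0: "s n0 \<le> T + e" using a_le[of m] m by (simp add: s_def)
  have Q: "(\<Sum>k<n0. (a k)^2) \<le> e * s n0"
  proof -
    have "(\<Sum>k<n0. (a k)^2) \<le> (\<Sum>k<n0. e * a k)"
    proof (rule sum_mono)
      fix k
      have "a k * a k \<le> e * a k" using mult_right_mono[OF a_le[of k] a0(1)[of k]] .
      then show "(a k)^2 \<le> e * a k" by (simp add: power2_eq_square)
    qed
    then show ?thesis by (simp add: s_def sum_distrib_left)
  qed
  have "e * s n0 \<le> e * (T + e)" using sn0 e0 by (intro mult_left_mono) auto
  also have "\<dots> = 1/2 + e*e" using e0 by (simp add: T_def field_simps)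
  also have "\<dots> \<le> 1/2 + 1/16" using e0 mult_mono[of e "1/4" e "1/4"] by simp
  finally have Qb: "(\<Sum>k<n0. (a k)^2) \<le> 1/2 + 1/16" using Q by simp
  have PPeq: "PP n0 z = (\<Prod>k<n0. 1 - (a k)^2/2)" by (simp add: PP_def ff_def a_def)
  have "1 - (\<Sum>k<n0. (a k)^2/2) \<le> (\<Prod>k<n0. 1 - (a k)^2/2)"
  proof -
    have "(a k)^2 \<le> 1" for k using a0[of k] by (simp add: power_le_one)
    then have "(a k)^2 \<le> 2" for k by (smt (verit))
    then show ?thesis using prod_lower[of "\<lambda>k. (a k)^2/2" n0] by simp
  qed
  moreover have "(\<Sum>k<n0. (a k)^2/2) = (\<Sum>k<n0. (a k)^2) / 2" by (simp add: sum_divide_distrib)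
  ultimately have PPb: "1/2 \<le> PP n0 z" using Qb PPeq by simp
  have "s n0 \<le> SS n0 z"
    unfolding s_def SS_def a_def
  proof (rule sum_mono)
    fix k
    let ?y = "(shift^^k) z"
    have "phi d ?y * ff d ?y \<le> phi d ?y * 1" by (intro mult_left_mono ff_bounds phi_bounds)
    then show "phi d ?y \<le> phi d ?y / ff d ?y" using ff_pos[of ?y] by (simp add: pos_le_divide_eq)
  qed
  then have SSb: "T \<le> SS n0 z" using n0(1) by simp
  have "1/2 * T \<le> PP n0 z * SS n0 z" using PPb SSb T0 by (intro mult_mono) auto
  moreover have "1/2 * T = \<bar>M\<bar> + 1" by (simp add: T_def e_def field_simps)
  ultimately have "M < PP n0 z * SS n0 z" by simp
  then have "M < opnorm (cocycle AA shift n0 z)" using norm_lower(1)[of n0 z] by simp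
  then show ?thesis using m zS by (intro exI[of _ n0]) auto
qed

end


theorem theorem2:
  fixes d :: "(int \<Rightarrow> nat) \<Rightarrow> (int \<Rightarrow> nat) \<Rightarrow> real"
  assumes "Metric_space Sigma2 d"
    and "Metric_space.mtopology Sigma2 d = prod_top"
  shows "\<exists>f g \<phi> :: (int \<Rightarrow> nat) \<Rightarrow> real.
     (\<forall>x\<in>Sigma2. 0 < f x \<and> f x \<le> 1 \<and> 0 < g x \<and> g x \<le> 1)
   \<and> lipschitz_wrt d Sigma2 f \<and> lipschitz_wrt d Sigma2 g \<and> lipschitz_wrt d Sigma2 \<phi>
   \<and> (let A = (\<lambda>x. uptri (f x) (\<phi> x) (g x)) in
        (\<forall>n. bdd_above ((\<lambda>x. opnorm (cocycle A shift n x)) ` Sigma2))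
      \<and> ((\<lambda>n. (SUP x\<in>Sigma2. opnorm (cocycle A shift n x)) powr (1 / real n)) \<longlonglongrightarrow> 1)
      \<and> ((\<lambda>n. (SUP x\<in>Sigma2. opnorm (cocycle A shift n x)) / real n) \<longlonglongrightarrow> 0)
      \<and> (\<forall>M. \<exists>n\<ge>1. \<exists>x\<in>Sigma2. opnorm (cocycle A shift n x) > M))"
proof -
  have AAeq: "(\<lambda>x. uptri (ff d x) (phi d x) (ff d x)) = AA d" using assms by (auto simp: fun_eq_iff AA_def)
  have oneS: "one_seq \<in> Sigma2" using one_seq_H1 H1_sub by blast
  have up: "opnorm (cocycle (AA d) shift n x) \<le> 2 + 2 * sqrt (real n)" for n x
    by (rule norm_upper[OF assms])
  have bdd: "bdd_above ((\<lambda>x. opnorm (cocycle (AA d) shift n x)) ` Sigma2)" for n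
    using up by (intro bdd_aboveI2) blast
  have sup_le: "(SUP x\<in>Sigma2. opnorm (cocycle (AA d) shift n x)) \<le> 2 + 2 * sqrt (real n)" for n
    using oneS up by (intro cSUP_least) auto
  have sup_ge: "1 \<le> (SUP x\<in>Sigma2. opnorm (cocycle (AA d) shift n x))" for n
    using norm_one_seq[OF assms, of n] cSUP_upper[OF oneS bdd[of n]] by linarith
  have lim1: "(\<lambda>n. (SUP x\<in>Sigma2. opnorm (cocycle (AA d) shift n x)) powr (1 / real n)) \<longlonglongrightarrow> 1"
  proof (rule tendsto_sandwich[of "\<lambda>n. 1" _ _ "\<lambda>n. (2 + 2 * sqrt (real n)) powr (1 / real n)"])
    show "\<forall>\<^sub>F n in sequentially. 1 \<le> (SUP x\<in>Sigma2. opnorm (cocycle (AA d) shift n x)) powr (1 / real n)"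
      using sup_ge by (intro always_eventually allI ge_one_powr_ge_zero) auto
    show "\<forall>\<^sub>F n in sequentially. (SUP x\<in>Sigma2. opnorm (cocycle (AA d) shift n x)) powr (1 / real n)
        \<le> (2 + 2 * sqrt (real n)) powr (1 / real n)"
      using sup_ge sup_le by (intro always_eventually allI powr_mono2) (auto intro: order_trans[OF zero_le_one])
    show "(\<lambda>n. 1::real) \<longlonglongrightarrow> 1" by simp
    show "(\<lambda>n. (2 + 2 * sqrt (real n)) powr (1 / real n)) \<longlonglongrightarrow> 1" by real_asymp
  qed
  have lim2: "(\<lambda>n. (SUP x\<in>Sigma2. opnorm (cocycle (AA d) shift n x)) / real n) \<longlonglongrightarrow> 0"
  proof (rule tendsto_sandwich[of "\<lambda>n. 0" _ _ "\<lambda>n. (2 + 2 * sqrt (real n)) / real n"])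
    show "\<forall>\<^sub>F n in sequentially. 0 \<le> (SUP x\<in>Sigma2. opnorm (cocycle (AA d) shift n x)) / real n"
      using sup_ge by (intro always_eventually allI divide_nonneg_nonneg) (auto intro: order_trans[OF zero_le_one])
    show "\<forall>\<^sub>F n in sequentially. (SUP x\<in>Sigma2. opnorm (cocycle (AA d) shift n x)) / real n
        \<le> (2 + 2 * sqrt (real n)) / real n"
      using sup_le by (intro always_eventually allI divide_right_mono) auto
    show "(\<lambda>n. 0::real) \<longlonglongrightarrow> 0" by simp
    show "(\<lambda>n. (2 + 2 * sqrt (real n)) / real n) \<longlonglongrightarrow> 0" by real_asymp
  qed
  have lipf: "lipschitz_wrt d Sigma2 (ff d)"
    unfolding lipschitz_wrt_def using ff_lip[OF assms] by (intro exI[of _ 1]) auto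
  have lipphi: "lipschitz_wrt d Sigma2 (phi d)"
    unfolding lipschitz_wrt_def using phi_lip[OF assms] by (intro exI[of _ 1]) auto
  have fb: "\<forall>x\<in>Sigma2. 0 < ff d x \<and> ff d x \<le> 1"
    using ff_pos[OF assms] ff_bounds[OF assms] by blast
  show ?thesis
    apply (rule exI[of _ "ff d"], rule exI[of _ "ff d"], rule exI[of _ "phi d"])
    unfolding Let_def AAeq
    using fb lipf lipphi bdd lim1 lim2 unbounded[OF assms] by blast
qed

end
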